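(* Let $P(a,b)=\dfrac{a(1-b)}{a(1-b)+b(1-a)}$ (the James function) and let $0<c<1$. Then the level curve $\{(a,b)\in(0,1)^2 : P(a,b)=c\}$ is the graph of the unique solution $b=b(a)$, $0<a<1$, of the differential equation \[ \frac{db}{da}=\frac{b(1-b)}{a(1-a)} \] that passes through the point $(c,\tfrac12)$. *)

theory Defs
  imports Complex_Main
begin

definition james :: "real \<Rightarrow> real \<Rightarrow> real" where
  "james a b = a * (1 - b) / (a * (1 - b) + b * (1 - a))"

end

theory Submission
  imports Defs
begin

lemma lin_ode_zero_right:
  fixes d h :: "real \<Rightarrow> real"
  assumes der: "\<And>t. t \<in> {0<..<1} \<Longrightarrow> (d has_real_derivative d t * h t) (at t)"
    and hc: "continuous_on {0<..<1} h"
    and c: "c \<in> {0<..<1}" and d0: "d c = 0"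
    and a: "a \<in> {0<..<1}" "c \<le> a"
  shows "d a = 0"
proof -
  have sub: "{c..a} \<subseteq> {0<..<1}" using a c by auto
  have "continuous_on {c..a} (\<lambda>t. \<bar>h t\<bar>)"
    using continuous_on_subset[OF hc sub] by (intro continuous_intros)
  then obtain x where "x \<in> {c..a}" and M: "\<forall>t\<in>{c..a}. \<bar>h t\<bar> \<le> \<bar>h x\<bar>"
    using continuous_attains_sup[of "{c..a}" "\<lambda>t. \<bar>h t\<bar>"] a by auto
  define M where "M = \<bar>h x\<bar>"
  define g where "g t = (d t)^2 * exp (- 2 * M * t)" for t
  have "g a \<le> g c"
  proof (rule DERIV_nonpos_imp_nonincreasing[OF a(2)])
    fix t assume t: "c \<le> t" "t \<le> a"
    then have tin: "t \<in> {0<..<1}" using sub by auto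
    have ht: "h t \<le> M" using M t unfolding M_def by force
    have D: "(g has_real_derivative
        (2 * d t * (d t * h t)) * exp (- 2 * M * t) + (d t)^2 * (exp (- 2 * M * t) * (- 2 * M))) (at t)"
      unfolding g_def
      by (rule derivative_eq_intros der[OF tin] refl | simp)+
    have "(2 * d t * (d t * h t)) * exp (- 2 * M * t) + (d t)^2 * (exp (- 2 * M * t) * (- 2 * M))
        = 2 * (d t)^2 * exp (- 2 * M * t) * (h t - M)"
      by (simp add: algebra_simps power2_eq_square)
    also have "\<dots> \<le> 0"
      using ht by (intro mult_nonneg_nonpos) auto
    finally show "\<exists>y. DERIV g t :> y \<and> y \<le> 0" using D by blast
  qed
  then have "(d a)^2 * exp (- 2 * M * a) \<le> 0" using d0 by (simp add: g_def)
  then have "(d a)^2 \<le> 0"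
    by (simp add: mult_le_0_iff)
  then show ?thesis by simp
qed

lemma lin_ode_zero_left:
  fixes d h :: "real \<Rightarrow> real"
  assumes der: "\<And>t. t \<in> {0<..<1} \<Longrightarrow> (d has_real_derivative d t * h t) (at t)"
    and hc: "continuous_on {0<..<1} h"
    and c: "c \<in> {0<..<1}" and d0: "d c = 0"
    and a: "a \<in> {0<..<1}" "a \<le> c"
  shows "d a = 0"
proof -
  have sub: "{a..c} \<subseteq> {0<..<1}" using a c by auto
  have "continuous_on {a..c} (\<lambda>t. \<bar>h t\<bar>)"
    using continuous_on_subset[OF hc sub] by (intro continuous_intros)
  then obtain x where "x \<in> {a..c}" and M: "\<forall>t\<in>{a..c}. \<bar>h t\<bar> \<le> \<bar>h x\<bar>"
    using continuous_attains_sup[of "{a..c}" "\<lambda>t. \<bar>h t\<bar>"] a by auto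
  define M where "M = \<bar>h x\<bar>"
  define g where "g t = (d t)^2 * exp (2 * M * t)" for t
  have "g a \<le> g c"
  proof (rule DERIV_nonneg_imp_nondecreasing[OF a(2)])
    fix t assume t: "a \<le> t" "t \<le> c"
    then have tin: "t \<in> {0<..<1}" using sub by auto
    have ht: "- M \<le> h t" using M t unfolding M_def by force
    have D: "(g has_real_derivative
        (2 * d t * (d t * h t)) * exp (2 * M * t) + (d t)^2 * (exp (2 * M * t) * (2 * M))) (at t)"
      unfolding g_def
      by (rule derivative_eq_intros der[OF tin] refl | simp)+
    have "(2 * d t * (d t * h t)) * exp (2 * M * t) + (d t)^2 * (exp (2 * M * t) * (2 * M))
        = 2 * (d t)^2 * exp (2 * M * t) * (h t + M)"
      by (simp add: algebra_simps power2_eq_square)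
    also have "\<dots> \<ge> 0"
      using ht by (intro mult_nonneg_nonneg) auto
    finally show "\<exists>y. DERIV g t :> y \<and> y \<ge> 0" using D by blast
  qed
  then have "(d a)^2 * exp (2 * M * a) \<le> 0" using d0 by (simp add: g_def)
  then have "(d a)^2 \<le> 0"
    by (simp add: mult_le_0_iff)
  then show ?thesis by simp
qed

theorem proposition3p3:
  fixes c :: real
  assumes "0 < c" "c < 1"
  shows "\<exists>b :: real \<Rightarrow> real.
     (\<forall>a\<in>{0<..<1}. (b has_real_derivative (b a * (1 - b a) / (a * (1 - a)))) (at a))
   \<and> b c = 1/2
   \<and> (\<forall>b' :: real \<Rightarrow> real.
         (\<forall>a\<in>{0<..<1}. (b' has_real_derivative (b' a * (1 - b' a) / (a * (1 - a)))) (at a))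
         \<and> b' c = 1/2 \<longrightarrow> (\<forall>a\<in>{0<..<1}. b' a = b a))
   \<and> {(a, y). a \<in> {0<..<1} \<and> y \<in> {0<..<1} \<and> james a y = c} = {(a, b a) | a. a \<in> {0<..<1}}"
proof -
  define z where "z a = a * (1 - c) / (a * (1 - c) + c * (1 - a))" for a
  have Dpos: "a * (1 - c) + c * (1 - a) > 0" if "a \<in> {0<..<1}" for a
    using that assms by (auto intro!: add_pos_pos mult_pos_pos)
  have zder: "(z has_real_derivative (z a * (1 - z a) / (a * (1 - a)))) (at a)"
    if a: "a \<in> {0<..<1}" for a
  proof -
    define D where "D = a * (1 - c) + c * (1 - a)"
    have Dp: "D > 0" using Dpos[OF a] D_def by simp
    have "(z has_real_derivative
        (((1 - c)) * D - a * (1 - c) * ((1 - c) - c)) / D^2) (at a)"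
      unfolding z_def
      apply (rule derivative_eq_intros refl | simp)+
      using Dp D_def by (simp_all add: power2_eq_square)
    moreover have "(((1 - c)) * D - a * (1 - c) * ((1 - c) - c)) / D^2
        = z a * (1 - z a) / (a * (1 - a))"
      using Dp a unfolding z_def D_def[symmetric]
      by (simp add: field_simps power2_eq_square) (simp add: D_def algebra_simps)
    ultimately show ?thesis by simp
  qed
  have zc: "z c = 1/2"
    using assms unfolding z_def by (simp add: field_simps)
  have zcont: "continuous_on {0<..<1} z"
    using zder by (intro DERIV_continuous_on) (blast intro: has_field_derivative_at_within)
  have uniq: "b' a = z a"
    if hb: "\<forall>a\<in>{0<..<1}. (b' has_real_derivative (b' a * (1 - b' a) / (a * (1 - a)))) (at a)"
      and bc: "b' c = 1/2" and a: "a \<in> {0<..<1}" for b' a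
  proof -
    define d where "d t = b' t - z t" for t
    define h where "h t = (1 - b' t - z t) / (t * (1 - t))" for t
    have bcont: "continuous_on {0<..<1} b'"
      using hb by (intro DERIV_continuous_on) (blast intro: has_field_derivative_at_within)
    have hc: "continuous_on {0<..<1} h"
      unfolding h_def using bcont zcont
      by (intro continuous_intros) auto
    have der: "(d has_real_derivative d t * h t) (at t)" if t: "t \<in> {0<..<1}" for t
    proof -
      have "(d has_real_derivative (b' t * (1 - b' t) / (t * (1 - t))) - (z t * (1 - z t) / (t * (1 - t)))) (at t)"
        unfolding d_def using hb t zder[OF t] by (intro derivative_intros) auto
      moreover have "(b' t * (1 - b' t) / (t * (1 - t))) - (z t * (1 - z t) / (t * (1 - t))) = d t * h t"
      proof -
        have nz: "t * (1 - t) \<noteq> 0" using t by auto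
        show ?thesis unfolding d_def h_def diff_divide_distrib[symmetric] times_divide_eq_right
          by (rule arg_cong[where f="\<lambda>x. x / (t * (1 - t))"]) (simp add: algebra_simps)
      qed
      ultimately show ?thesis by simp
    qed
    have c': "c \<in> {0<..<1}" using assms by simp
    have d0: "d c = 0" using bc zc d_def by simp
    have "d a = 0"
    proof (cases "c \<le> a")
      case True thus ?thesis using lin_ode_zero_right[OF der hc c' d0 a] by blast
    next
      case False thus ?thesis using lin_ode_zero_left[OF der hc c' d0 a] by simp
    qed
    thus ?thesis unfolding d_def by simp
  qed
  have zin: "z a \<in> {0<..<1}" if a: "a \<in> {0<..<1}" for a
    using Dpos[OF a] a assms unfolding z_def
    by (auto simp: field_simps intro!: mult_pos_pos)
  have eqv: "james a y = c \<longleftrightarrow> y = z a" if a: "a \<in> {0<..<1}" and y: "y \<in> {0<..<1}" for a y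
  proof -
    have p: "a * (1 - y) + y * (1 - a) > 0" using a y by (auto intro!: add_pos_pos)
    have q: "a * (1 - c) + c * (1 - a) > 0" using Dpos[OF a] .
    have "james a y = c \<longleftrightarrow> a * (1 - y) = c * (a * (1 - y) + y * (1 - a))"
      unfolding james_def using p by (simp add: field_simps)
    also have "\<dots> \<longleftrightarrow> y * (a * (1 - c) + c * (1 - a)) = a * (1 - c)"
      by (simp add: algebra_simps) (smt (verit))
    also have "\<dots> \<longleftrightarrow> y = z a"
      unfolding z_def using q by (simp add: field_simps)
    finally show ?thesis .
  qed
  have set: "{(a, y). a \<in> {0<..<1} \<and> y \<in> {0<..<1} \<and> james a y = c} = {(a, z a) | a. a \<in> {0<..<1}}"
    using eqv zin by fastforce
  show ?thesis
    apply (rule exI[of _ z])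
    using zder zc uniq set by blast
qed

end
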